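(* Consider the network-interference setting and the conditional randomization test described in the context, and suppose the null hypothesis $H_0^{\mathrm{sp}}$ holds, i.e. in the outcome model $h\neq0$ and $g=0$. Then $$\mathbb{P}(\mathrm{pval}\le\alpha\mid\mathcal{I})\le\alpha\quad\text{for every }\alpha\in[0,1]\text{ and every }n>0,$$ where the randomness is with respect to the conditional randomization distribution $\mathbb{P}_n^{\mathcal{I}}$.
   Context: Units $i=1,\dots,n$ receive treatments $Z\in\{0,1\}^n$ from a known design $\mathbb{P}_n$. Potential outcomes: $Y_i(z)=\mu+b(X_i)+z_ih(X_i)+g(\mathbf{X},z_{-i})+\epsilon_i$, observed $Y_i=Y_i(Z)$, with covariates $X_i$, covariate matrix $\mathbf{X}$, $z_{-i}$ the vector $z$ without entry $i$, arbitrary functions $b,h,g$, and independent mean-zero noise with $\mathbb{E}(\epsilon_i\mid\mathbf{X})=0$. An adjacency matrix $\mathbf{A}\in\{0,1\}^{n\times n}$ is observed; $A_{i\cdot}$ is its $i$-th row. A set of focal units $\mathcal{I}\subset[n]$ is selected at random. Test: fit, on units $i\in\mathcal{I}$ only, a model $\mathcal{M}_0$ of $Y_i$ on $(Z_i,X_i)$ and a model $\mathcal{M}_1$ of $Y_i$ on $(Z_i,A_{i\cdot}^\top Z,\mathbf{X})$ (any ML models), and set $t_n(Y,Z,\mathbf{X};\mathbf{A})=\mathrm{CV}_{n,k}(\mathcal{M}_0)-\mathrm{CV}_{n,k}(\mathcal{M}_1)$ (difference of $k$-fold cross-validation squared losses). Let $T_n=t_n(Y,Z,\mathbf{X};\mathbf{A})$.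 Let $\mathbb{P}_n^{\mathcal{I}}(z)\propto\mathbb{1}\{z_{\mathcal{I}}=Z_{\mathcal{I}}\}\mathbb{P}_n(z)$, the design conditioned on the focal units' treatments equalling their realized values. Draw $Z^{(r)}$ i.i.d. from $\mathbb{P}_n^{\mathcal{I}}$, $r=1,\dots,R$, compute $t^{(r)}=t_n(Y,Z^{(r)},\mathbf{X};\mathbf{A})$, and set $\mathrm{pval}=\frac1{1+R}[\sum_r\mathbb{1}\{t^{(r)}>T_n\}+U(1+m_R)]$ with $U\sim\mathrm{Unif}[0,1]$ independent and $m_R=\sum_r\mathbb{1}\{t^{(r)}=T_n\}$. *)

theory Defs
  imports "HOL-Probability.Probability"
begin

definition valid_assign :: "nat \<Rightarrow> (nat \<Rightarrow> real) \<Rightarrow> bool" where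
  "valid_assign n z \<longleftrightarrow> (\<forall>i<n. z i \<in> {0,1}) \<and> (\<forall>i\<ge>n. z i = 0)"

text \<open>z with entry i removed (coded by setting it to 0).\<close>
definition drop_entry :: "nat \<Rightarrow> (nat \<Rightarrow> real) \<Rightarrow> (nat \<Rightarrow> real)" where
  "drop_entry i z = (\<lambda>j. if j = i then 0 else z j)"

definition pot_outcome ::
  "real \<Rightarrow> ('x \<Rightarrow> real) \<Rightarrow> ('x \<Rightarrow> real) \<Rightarrow> ((nat \<Rightarrow> 'x) \<Rightarrow> (nat \<Rightarrow> real) \<Rightarrow> real)
    \<Rightarrow> (nat \<Rightarrow> 'x) \<Rightarrow> (nat \<Rightarrow> real) \<Rightarrow> (nat \<Rightarrow> real) \<Rightarrow> nat \<Rightarrow> real" where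
  "pot_outcome \<mu> b h g X eps z i = \<mu> + b (X i) + z i * h (X i) + g X (drop_entry i z) + eps i"

definition exposure :: "nat \<Rightarrow> (nat \<Rightarrow> nat \<Rightarrow> real) \<Rightarrow> (nat \<Rightarrow> real) \<Rightarrow> nat \<Rightarrow> real" where
  "exposure n A z i = (\<Sum>j<n. A i j * z j)"

definition cv_loss ::
  "nat set \<Rightarrow> nat \<Rightarrow> (nat \<Rightarrow> nat) \<Rightarrow> (nat set \<Rightarrow> (nat \<Rightarrow> 'f) \<Rightarrow> (nat \<Rightarrow> real) \<Rightarrow> ('f \<Rightarrow> real))
    \<Rightarrow> (nat \<Rightarrow> 'f) \<Rightarrow> (nat \<Rightarrow> real) \<Rightarrow> real" where
  "cv_loss I k fold_of fit feat Y =
     (\<Sum>j<k. \<Sum>i\<in>{i\<in>I. fold_of i = j}.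
        (let train = {l\<in>I. fold_of l \<noteq> j}
         in (Y i - fit train (restrict feat train) (restrict Y train) (feat i))\<^sup>2)) / real (card I)"

definition test_stat ::
  "nat \<Rightarrow> nat set \<Rightarrow> nat \<Rightarrow> (nat \<Rightarrow> nat)
    \<Rightarrow> (nat set \<Rightarrow> (nat \<Rightarrow> real \<times> 'x) \<Rightarrow> (nat \<Rightarrow> real) \<Rightarrow> (real \<times> 'x \<Rightarrow> real))
    \<Rightarrow> (nat set \<Rightarrow> (nat \<Rightarrow> real \<times> real \<times> (nat \<Rightarrow> 'x)) \<Rightarrow> (nat \<Rightarrow> real)
          \<Rightarrow> (real \<times> real \<times> (nat \<Rightarrow> 'x) \<Rightarrow> real))
    \<Rightarrow> (nat \<Rightarrow> real) \<Rightarrow> (nat \<Rightarrow> real) \<Rightarrow> (nat \<Rightarrow> 'x) \<Rightarrow> (nat \<Rightarrow> nat \<Rightarrow> real) \<Rightarrow> real" where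
  "test_stat n I k fold_of fit0 fit1 Y z X A =
     cv_loss I k fold_of fit0 (\<lambda>i. (z i, X i)) Y
   - cv_loss I k fold_of fit1 (\<lambda>i. (z i, exposure n A z i, X)) Y"

definition cond_design :: "(nat \<Rightarrow> real) pmf \<Rightarrow> nat set \<Rightarrow> (nat \<Rightarrow> real) \<Rightarrow> (nat \<Rightarrow> real) pmf" where
  "cond_design D I Z = cond_pmf D {z. \<forall>i\<in>I. z i = Z i}"

definition crt_draws :: "(nat \<Rightarrow> real) pmf \<Rightarrow> nat set \<Rightarrow> nat
    \<Rightarrow> ((nat \<Rightarrow> real) \<times> (nat \<Rightarrow> (nat \<Rightarrow> real))) pmf" where
  "crt_draws D I R = do {
      Z \<leftarrow> D;
      Zs \<leftarrow> Pi_pmf {..<R} (\<lambda>_. 0) (\<lambda>_. cond_design D I Z);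
      return_pmf (Z, Zs) }"

definition crt_pval :: "nat \<Rightarrow> ((nat \<Rightarrow> real) \<Rightarrow> real) \<Rightarrow> (nat \<Rightarrow> real) \<Rightarrow> (nat \<Rightarrow> (nat \<Rightarrow> real)) \<Rightarrow> real \<Rightarrow> real" where
  "crt_pval R t Z Zs U =
     (real (card {r\<in>{..<R}. t (Zs r) > t Z})
      + U * (1 + real (card {r\<in>{..<R}. t (Zs r) = t Z}))) / (1 + real R)"

end

theory Submission imports Defs begin

definition clamp01 :: "real \<Rightarrow> real" where "clamp01 y = min 1 (max 0 y)"

lemma det_bound:
  fixes w :: "nat \<Rightarrow> real"
  assumes "finite J"
  shows "(\<Sum>j\<in>J. clamp01 ((x - real (card {r\<in>J. w r > w j})) / real (card {r\<in>J. w r = w j}))) \<le> max x 0"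
  using assms
proof (induction J arbitrary: x rule: finite_psubset_induct)
  case (psubset J)
  show ?case
  proof (cases "J = {}")
    case True then show ?thesis by simp
  next
    case False
    define m where "m = Max (w ` J)"
    define M where "M = {j\<in>J. w j = m}"
    define J' where "J' = J - M"
    define e where "e = card M"
    have mJ: "m \<in> w ` J" using False psubset.hyps m_def by simp
    have le: "\<forall>j\<in>J. w j \<le> m" using psubset.hyps m_def by simp
    have Mne: "M \<noteq> {}" using mJ M_def by auto
    have finM: "finite M" using psubset.hyps M_def by simp
    have ePos: "e > 0" using finM Mne e_def by (simp add: card_gt_0_iff)
    have MJ: "M \<subseteq> J" using M_def by auto
    have sub: "J' \<subset> J" using Mne J'_def MJ by auto
    have finJ': "finite J'" using psubset.hyps J'_def by simp
    have IH: "(\<Sum>j\<in>J'. clamp01 ((x - e - real (card {r\<in>J'. w r > w j})) / real (card {r\<in>J'. w r = w j}))) \<le> max (x - e) 0"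
      using psubset.IH[OF sub, of "x - e"] by simp
    let ?f = "\<lambda>j. clamp01 ((x - real (card {r\<in>J. w r > w j})) / real (card {r\<in>J. w r = w j}))"
    have split: "sum ?f J = sum ?f J' + sum ?f M"
      using sum.subset_diff[OF MJ psubset.hyps] J'_def by simp
    have fM: "?f j = clamp01 (x / e)" if "j \<in> M" for j
    proof -
      have h1: "{r\<in>J. w r > w j} = {}" using le that M_def by force
      have h2: "{r\<in>J. w r = w j} = M" using that M_def by auto
      show ?thesis unfolding h1 h2 e_def by simp
    qed
    have fJ': "?f j = clamp01 ((x - e - real (card {r\<in>J'. w r > w j})) / real (card {r\<in>J'. w r = w j}))"
      if "j \<in> J'" for j
    proof -
      have wj: "w j < m" using that J'_def M_def le by force
      have A: "{r\<in>J. w r > w j} = M \<union> {r\<in>J'. w r > w j}" using wj M_def J'_def le by auto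
      have B: "M \<inter> {r\<in>J'. w r > w j} = {}" using J'_def by auto
      have "card {r\<in>J. w r > w j} = e + card {r\<in>J'. w r > w j}"
        unfolding A e_def using card_Un_disjoint[OF finM _ B] finJ' by simp
      moreover have "{r\<in>J. w r = w j} = {r\<in>J'. w r = w j}" using wj M_def J'_def by auto
      ultimately show ?thesis by (simp add: algebra_simps)
    qed
    have "sum ?f M = e * clamp01 (x / e)" using fM e_def by simp
    also have "\<dots> = min e (max 0 x)"
      using ePos by (auto simp: clamp01_def min_def max_def field_simps)
    finally have sM: "sum ?f M = min e (max 0 x)" .
    have "sum ?f J' \<le> max (x - e) 0" using IH fJ' by (simp cong: sum.cong)
    then show ?thesis using split sM by linarith
  qed
qed


lemma card_perm:
  assumes inv: "\<And>r. h (h r) = r" and cl: "\<And>r. r \<in> A \<Longrightarrow> h r \<in> A"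
  shows "card {r\<in>A. P (h r)} = card {s\<in>A. P s}"
proof -
  have "{r\<in>A. P (h r)} = h ` {s\<in>A. P s}"
  proof
    show "{r\<in>A. P (h r)} \<subseteq> h ` {s\<in>A. P s}"
    proof
      fix r assume "r \<in> {r\<in>A. P (h r)}"
      then have "h r \<in> {s\<in>A. P s}" "r = h (h r)" using cl inv by auto
      then show "r \<in> h ` {s\<in>A. P s}" by blast
    qed
    show "h ` {s\<in>A. P s} \<subseteq> {r\<in>A. P (h r)}" using cl inv by auto
  qed
  moreover have "inj h" by (metis inv injI)
  ultimately show ?thesis by (simp add: card_image inj_on_subset)
qed

definition psi :: "nat \<Rightarrow> real \<Rightarrow> (nat \<Rightarrow> real) \<Rightarrow> nat \<Rightarrow> real" where
  "psi R x w j = clamp01 ((x - real (card {r\<in>{..R}. w r > w j})) / real (card {r\<in>{..R}. w r = w j}))"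

lemma exch:
  fixes C :: "'a pmf" and t :: "'a \<Rightarrow> real"
  assumes j: "j \<le> R"
  shows "(\<integral>\<^sup>+V. ennreal (psi R x (\<lambda>r. t (V r)) R) \<partial>Pi_pmf {..R} d (\<lambda>_. C))
       = (\<integral>\<^sup>+V. ennreal (psi R x (\<lambda>r. t (V r)) j) \<partial>Pi_pmf {..R} d (\<lambda>_. C))"
proof -
  define h where "h = (\<lambda>r::nat. if r = j then R else if r = R then j else r)"
  have inv: "\<And>r. h (h r) = r" unfolding h_def by auto
  have cl: "\<And>r. r \<in> {..R} \<Longrightarrow> h r \<in> {..R}" unfolding h_def using j by auto
  have bij: "bij_betw h {..R} {..R}"
    by (rule bij_betwI[where g=h]) (use j in \<open>auto simp: h_def\<close>)
  have out: "\<And>r. r \<notin> {..R} \<Longrightarrow> h r \<notin> {..R}" unfolding h_def using j by auto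
  have P: "Pi_pmf {..R} d (\<lambda>_. C) = map_pmf (\<lambda>g. g \<circ> h) (Pi_pmf {..R} d (\<lambda>_. C))"
    using Pi_pmf_bij_betw[OF _ bij out] by simp
  have hR: "h R = j" unfolding h_def by simp
  have key: "psi R x (\<lambda>r. t ((V \<circ> h) r)) R = psi R x (\<lambda>r. t (V r)) j" for V :: "nat \<Rightarrow> 'a"
    unfolding psi_def o_def hR
    using card_perm[OF inv cl, of "\<lambda>s. t (V s) > t (V j)"]
          card_perm[OF inv cl, of "\<lambda>s. t (V s) = t (V j)"] by simp
  have "(\<integral>\<^sup>+V. ennreal (psi R x (\<lambda>r. t (V r)) R) \<partial>Pi_pmf {..R} d (\<lambda>_. C))
      = (\<integral>\<^sup>+V. ennreal (psi R x (\<lambda>r. t ((V \<circ> h) r)) R) \<partial>Pi_pmf {..R} d (\<lambda>_. C))"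
    by (subst P) simp
  also have "\<dots> = (\<integral>\<^sup>+V. ennreal (psi R x (\<lambda>r. t (V r)) j) \<partial>Pi_pmf {..R} d (\<lambda>_. C))"
    by (simp only: key)
  finally show ?thesis .
qed

lemma psi_nonneg: "0 \<le> psi R x w j" unfolding psi_def clamp01_def by simp

lemma sum_exch:
  fixes C :: "'a pmf" and t :: "'a \<Rightarrow> real"
  assumes x: "0 \<le> x"
  shows "(\<integral>\<^sup>+V. ennreal (psi R x (\<lambda>r. t (V r)) R) \<partial>Pi_pmf {..R} d (\<lambda>_. C)) \<le> ennreal (x / (1 + real R))"
proof -
  let ?P = "Pi_pmf {..R} d (\<lambda>_. C)"
  let ?I = "\<integral>\<^sup>+V. ennreal (psi R x (\<lambda>r. t (V r)) R) \<partial>?P"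
  have "ennreal (1 + real R) * ?I = (\<Sum>j\<in>{..R}. ?I)" by (simp add: ennreal_of_nat_eq_real_of_nat)
  also have "\<dots> = (\<Sum>j\<in>{..R}. \<integral>\<^sup>+V. ennreal (psi R x (\<lambda>r. t (V r)) j) \<partial>?P)"
    by (rule sum.cong) (auto simp: exch)
  also have "\<dots> = (\<integral>\<^sup>+V. (\<Sum>j\<in>{..R}. ennreal (psi R x (\<lambda>r. t (V r)) j)) \<partial>?P)"
    by (rule nn_integral_sum[symmetric]) simp
  also have "\<dots> = (\<integral>\<^sup>+V. ennreal (\<Sum>j\<in>{..R}. psi R x (\<lambda>r. t (V r)) j) \<partial>?P)"
    by (simp add: sum_ennreal psi_nonneg)
  also have "\<dots> \<le> (\<integral>\<^sup>+V. ennreal x \<partial>?P)"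
  proof (rule nn_integral_mono)
    fix V :: "nat \<Rightarrow> 'a"
    have "(\<Sum>j\<in>{..R}. psi R x (\<lambda>r. t (V r)) j) \<le> max x 0"
      unfolding psi_def by (rule det_bound) simp
    then show "ennreal (\<Sum>j\<in>{..R}. psi R x (\<lambda>r. t (V r)) j) \<le> ennreal x"
      using x by (simp add: ennreal_leI)
  qed
  also have "\<dots> = ennreal x" by (simp add: measure_pmf.emeasure_space_1)
  also have "\<dots> = ennreal ((1 + real R) * (x / (1 + real R)))" by simp
  also have "\<dots> = ennreal (1 + real R) * ennreal (x / (1 + real R))"
    by (rule ennreal_mult) (use x in auto)
  finally show ?thesis
    by (subst (asm) ennreal_mult_le_mult_iff) auto
qed


lemma psi_upd:
  fixes t :: "'a \<Rightarrow> real"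
  shows "psi R x (\<lambda>r. t ((Zs(R := Z)) r)) R =
    clamp01 ((x - real (card {r\<in>{..<R}. t (Zs r) > t Z})) / (1 + real (card {r\<in>{..<R}. t (Zs r) = t Z})))"
proof -
  have A: "{r\<in>{..R}. t ((Zs(R := Z)) r) > t ((Zs(R := Z)) R)} = {r\<in>{..<R}. t (Zs r) > t Z}"
    by (auto simp: le_less)
  have B: "{r\<in>{..R}. t ((Zs(R := Z)) r) = t ((Zs(R := Z)) R)} = insert R {r\<in>{..<R}. t (Zs r) = t Z}"
    by (auto simp: le_less)
  show ?thesis unfolding psi_def A B by simp
qed

lemma core:
  fixes C :: "'a pmf" and t :: "'a \<Rightarrow> real"
  assumes x: "0 \<le> x"
  shows "(\<integral>\<^sup>+Z. \<integral>\<^sup>+Zs. ennreal (clamp01 ((x - real (card {r\<in>{..<R}. t (Zs r) > t Z})) / (1 + real (card {r\<in>{..<R}. t (Zs r) = t Z})))) \<partial>Pi_pmf {..<R} d (\<lambda>_. C) \<partial>C) \<le> ennreal (x / (1 + real R))"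
proof -
  have ins: "{..R} = insert R {..<R}" by auto
  have P: "Pi_pmf {..R} d (\<lambda>_. C) = map_pmf (\<lambda>(y,f). f(R:=y)) (pair_pmf C (Pi_pmf {..<R} d (\<lambda>_. C)))"
    unfolding ins by (rule Pi_pmf_insert) auto
  have "(\<integral>\<^sup>+V. ennreal (psi R x (\<lambda>r. t (V r)) R) \<partial>Pi_pmf {..R} d (\<lambda>_. C))
     = (\<integral>\<^sup>+Z. \<integral>\<^sup>+Zs. ennreal (clamp01 ((x - real (card {r\<in>{..<R}. t (Zs r) > t Z})) / (1 + real (card {r\<in>{..<R}. t (Zs r) = t Z})))) \<partial>Pi_pmf {..<R} d (\<lambda>_. C) \<partial>C)"
    unfolding P by (simp only: nn_integral_map_pmf nn_integral_pair_pmf' case_prod_conv psi_upd)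
  then show ?thesis using sum_exch[OF x, where R=R and t=t and d=d and C=C] by simp
qed


lemma unif_le: "emeasure (uniform_measure lborel {0..1::real}) {U. U \<le> y} = ennreal (clamp01 y)"
proof -
  have "{0..1::real} \<inter> {U. U \<le> y} = {0..min 1 y}" by auto
  then show ?thesis
    by (simp add: emeasure_lborel_Icc_eq clamp01_def divide_ennreal_def)
qed

lemma pval_iff:
  fixes a e :: nat and R :: nat
  shows "((real a + U * (1 + real e)) / (1 + real R) \<le> \<alpha>) \<longleftrightarrow>
          U \<le> ((1 + real R) * \<alpha> - real a) / (1 + real e)"
proof -
  have p1: "(0::real) < 1 + real R" by simp
  have p2: "(0::real) < 1 + real e" by simp
  show ?thesis using p1 p2
    by (simp add: pos_divide_le_eq pos_le_divide_eq algebra_simps)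
qed

lemma cv_loss_cong:
  assumes "\<forall>i\<in>I. Y i = Y' i"
  shows "cv_loss I k f fit feat Y = cv_loss I k f fit feat Y'"
proof -
  have r: "restrict Y {l\<in>I. f l \<noteq> j} = restrict Y' {l\<in>I. f l \<noteq> j}" for j
    using assms by (auto simp: restrict_def)
  show ?thesis unfolding cv_loss_def Let_def r
    using assms by (intro arg_cong2[where f="(/)"] sum.cong refl) auto
qed


theorem theorem3:
  fixes n :: nat and D :: "(nat \<Rightarrow> real) pmf" and I :: "nat set"
    and \<mu> :: real and b h :: "'x \<Rightarrow> real"
    and g :: "(nat \<Rightarrow> 'x) \<Rightarrow> (nat \<Rightarrow> real) \<Rightarrow> real"
    and X :: "nat \<Rightarrow> 'x" and eps :: "nat \<Rightarrow> real"
    and A :: "nat \<Rightarrow> nat \<Rightarrow> real"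
    and k :: nat and fold_of :: "nat \<Rightarrow> nat"
    and fit0 :: "nat set \<Rightarrow> (nat \<Rightarrow> real \<times> 'x) \<Rightarrow> (nat \<Rightarrow> real) \<Rightarrow> (real \<times> 'x \<Rightarrow> real)"
    and fit1 :: "nat set \<Rightarrow> (nat \<Rightarrow> real \<times> real \<times> (nat \<Rightarrow> 'x)) \<Rightarrow> (nat \<Rightarrow> real)
                   \<Rightarrow> (real \<times> real \<times> (nat \<Rightarrow> 'x) \<Rightarrow> real)"
    and R :: nat and \<alpha> :: real
  assumes n_pos: "n > 0"
    and design: "\<forall>z\<in>set_pmf D. valid_assign n z"
    and adjacency: "\<forall>i j. A i j \<in> {0, 1}"
    and focal: "I \<subseteq> {..<n}"
    and folds: "\<forall>i\<in>I. fold_of i < k"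
    and null_h: "h \<noteq> (\<lambda>_. 0)"
    and null_g: "g = (\<lambda>_ _. 0)"
    and alpha: "0 \<le> \<alpha>" "\<alpha> \<le> 1"
  shows "measure (measure_pmf (crt_draws D I R) \<Otimes>\<^sub>M uniform_measure lborel {0..1})
           {((Z, Zs), U).
              crt_pval R
                (\<lambda>z. test_stat n I k fold_of fit0 fit1
                        (\<lambda>i. pot_outcome \<mu> b h g X eps Z i) z X A)
                Z Zs U \<le> \<alpha>} \<le> \<alpha>"
proof -
  define T where "T = (\<lambda>Z z. test_stat n I k fold_of fit0 fit1
                        (\<lambda>i. pot_outcome \<mu> b h g X eps Z i) z X A)"
  define M where "M = measure_pmf (crt_draws D I R)"
  define N where "N = uniform_measure lborel {0..1::real}"
  define S where "S = {((Z, Zs), U). crt_pval R (T Z) Z Zs U \<le> \<alpha>}"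
  define a where "a = (\<lambda>(Z, Zs::nat \<Rightarrow> nat \<Rightarrow> real). card {r\<in>{..<R}. T Z (Zs r) > T Z Z})"
  define e where "e = (\<lambda>(Z, Zs::nat \<Rightarrow> nat \<Rightarrow> real). card {r\<in>{..<R}. T Z (Zs r) = T Z Z})"
  define y where "y = (\<lambda>w. ((1 + real R) * \<alpha> - real (a w)) / (1 + real (e w)))"
  define SI where "SI = (\<lambda>Z::nat \<Rightarrow> real. {z. \<forall>i\<in>I. z i = Z i})"
  define C where "C = (\<lambda>Z. cond_pmf D (SI Z))"
  have T_cong: "T Z = T Z'" if "\<forall>i\<in>I. Z i = Z' i" for Z Z'
  proof -
    have "\<forall>i\<in>I. pot_outcome \<mu> b h g X eps Z i = pot_outcome \<mu> b h g X eps Z' i"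
      using that null_g by (simp add: pot_outcome_def)
    then show ?thesis unfolding T_def test_stat_def
      by (intro ext arg_cong2[where f="(-)"] cv_loss_cong) 
  qed
  have sec: "Pair w -` S = {U. U \<le> y w}" for w
  proof -
    obtain Z Zs where w: "w = (Z, Zs)" by (cases w)
    show ?thesis unfolding w S_def y_def a_def e_def crt_pval_def
      by (simp only: vimage_def mem_Collect_eq case_prod_conv pval_iff)
  qed
  have Smeas: "S \<in> sets (M \<Otimes>\<^sub>M N)"
  proof -
    have memS: "p \<in> S \<longleftrightarrow> snd p \<le> y (fst p)" for p
    proof -
      obtain w U where p: "p = (w, U)" by (cases p)
      have "U \<in> Pair w -` S \<longleftrightarrow> U \<in> {U. U \<le> y w}" using sec by simp
      then show ?thesis unfolding p by simp
    qed
    have "S = {p \<in> space (M \<Otimes>\<^sub>M N). snd p \<le> y (fst p)}"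
      using memS by (auto simp: space_pair_measure M_def N_def)
    also have "\<dots> \<in> sets (M \<Otimes>\<^sub>M N)"
    proof (rule borel_measurable_le)
      show "snd \<in> borel_measurable (M \<Otimes>\<^sub>M N)"
        unfolding N_def by (rule measurable_snd'') (subst measurable_cong_sets[OF sets_uniform_measure refl], simp)
      show "(\<lambda>p. y (fst p)) \<in> borel_measurable (M \<Otimes>\<^sub>M N)"
        by (rule measurable_compose[OF measurable_fst]) (simp add: M_def)
    qed
    finally show ?thesis .
  qed
  have "emeasure (M \<Otimes>\<^sub>M N) S = (\<integral>\<^sup>+w. emeasure N (Pair w -` S) \<partial>M)"
  proof -
    have "prob_space N" unfolding N_def by (rule prob_space_uniform_measure) auto
    then interpret N: prob_space N .
    show ?thesis by (rule N.emeasure_pair_measure_alt[OF Smeas])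
  qed
  also have "\<dots> = (\<integral>\<^sup>+w. ennreal (clamp01 (y w)) \<partial>M)"
    unfolding sec N_def unif_le ..
  also have "\<dots> \<le> ennreal \<alpha>"
  proof -
    define G where "G = (\<lambda>Z. \<integral>\<^sup>+Zs. ennreal (clamp01 (y (Z, Zs))) \<partial>Pi_pmf {..<R} (\<lambda>_. 0) (\<lambda>_. C Z))"
    have step1: "(\<integral>\<^sup>+w. ennreal (clamp01 (y w)) \<partial>M) = (\<integral>\<^sup>+Z. G Z \<partial>D)"
      unfolding M_def crt_draws_def G_def C_def cond_design_def SI_def by simp
    have tower: "bind_pmf D C = D"
      unfolding C_def SI_def
    proof (rule bind_cond_pmf_cancel)
      show "set_pmf D \<inter> {y. \<forall>i\<in>I. y i = x i} \<noteq> {}" if "x \<in> set_pmf D" for x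
        using that by auto
      show "set_pmf D \<inter> {x. \<forall>i\<in>I. y i = x i} \<noteq> {}" if "y \<in> set_pmf D" for y
        using that by auto
      show "measure D {y. \<forall>i\<in>I. y i = x i} = measure D {x. \<forall>i\<in>I. y i = x i}"
        if "\<forall>i\<in>I. y i = x i" for x y
        using that by (intro arg_cong[where f="measure D"]) auto
    qed
    have inner: "(\<integral>\<^sup>+Z. G Z \<partial>C Z') \<le> ennreal \<alpha>" if Z': "Z' \<in> set_pmf D" for Z'
    proof -
      have "(\<integral>\<^sup>+Z. G Z \<partial>C Z') = (\<integral>\<^sup>+Z. \<integral>\<^sup>+Zs. ennreal (clamp01 (((1 + real R) * \<alpha> - real (card {r\<in>{..<R}. T Z' (Zs r) > T Z' Z})) / (1 + real (card {r\<in>{..<R}. T Z' (Zs r) = T Z' Z})))) \<partial>Pi_pmf {..<R} (\<lambda>_. 0) (\<lambda>_. C Z') \<partial>C Z')"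
      proof (rule nn_integral_cong_AE, unfold AE_measure_pmf_iff, intro ballI)
        fix Z assume "Z \<in> set_pmf (C Z')"
        then have ZI: "\<forall>i\<in>I. Z i = Z' i" unfolding C_def SI_def
          using Z' by (subst (asm) set_cond_pmf) auto
        have TZ: "T Z = T Z'" using T_cong[OF ZI] .
        have "SI Z = SI Z'" unfolding SI_def using ZI by auto
        then have CZ: "C Z = C Z'" unfolding C_def by simp
        show "G Z = (\<integral>\<^sup>+Zs. ennreal (clamp01 (((1 + real R) * \<alpha> - real (card {r\<in>{..<R}. T Z' (Zs r) > T Z' Z})) / (1 + real (card {r\<in>{..<R}. T Z' (Zs r) = T Z' Z})))) \<partial>Pi_pmf {..<R} (\<lambda>_. 0) (\<lambda>_. C Z'))"
          unfolding G_def CZ y_def a_def e_def by (simp add: TZ)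
      qed
      also have "\<dots> \<le> ennreal ((1 + real R) * \<alpha> / (1 + real R))"
        by (rule core) (use alpha in simp)
      also have "\<dots> = ennreal \<alpha>" by simp
      finally show ?thesis .
    qed
    have "(\<integral>\<^sup>+Z. G Z \<partial>D) = (\<integral>\<^sup>+Z'. \<integral>\<^sup>+Z. G Z \<partial>C Z' \<partial>D)"
      by (subst (1) tower[symmetric]) simp
    also have "\<dots> \<le> (\<integral>\<^sup>+Z'. ennreal \<alpha> \<partial>D)"
      by (rule nn_integral_mono_AE) (simp add: AE_measure_pmf_iff inner)
    also have "\<dots> = ennreal \<alpha>" by (simp add: measure_pmf.emeasure_space_1)
    finally show ?thesis using step1 by simp
  qed
  finally have "emeasure (M \<Otimes>\<^sub>M N) S \<le> ennreal \<alpha>" .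
  then have "measure (M \<Otimes>\<^sub>M N) S \<le> \<alpha>"
    unfolding measure_def using alpha by (intro enn2real_leI) auto
  then show ?thesis unfolding M_def N_def S_def T_def .
qed

end
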